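(* Let $\mathcal{R}_1,\mathcal{R}_2$ be finite consistent sets of probabilistic constraints over propositional languages $\mathcal{L}_1,\mathcal{L}_2$ respectively, with $\mathrm{sig}(\mathcal{L}_1)\cap\mathrm{sig}(\mathcal{L}_2)=\emptyset$, and let $\mathcal{R}=\mathcal{R}_1\cup\mathcal{R}_2$, viewed over the language $\mathcal{L}$ with $\mathrm{sig}(\mathcal{L})=\mathrm{sig}(\mathcal{L}_1)\cup\mathrm{sig}(\mathcal{L}_2)$. Identifying $\mathrm{Int}(\mathcal{L})$ with $\mathrm{Int}(\mathcal{L}_1)\times\mathrm{Int}(\mathcal{L}_2)$, we have $P^{ME}_{\mathcal{R}}(v_1,v_2)=P^{ME}_{\mathcal{R}_1}(v_1)\cdot P^{ME}_{\mathcal{R}_2}(v_2)$ for all $v_1,v_2$. In particular, the marginals satisfy $P^{ME}_{\mathcal{R}}(v_i)=P^{ME}_{\mathcal{R}_i}(v_i)$ for all $v_i\in\mathrm{Int}(\mathcal{L}_i)$, $i\in\{1,2\}$.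
   Context: For a propositional language $\mathcal{L}$ over a finite set $\mathrm{sig}(\mathcal{L})$ of variables, $\mathrm{Int}(\mathcal{L})$ is the set of truth assignments. A probability distribution over $\mathcal{L}$ is $P:\mathrm{Int}(\mathcal{L})\to[0,1]$ summing to $1$, with $P(\phi)=\sum_{v\models\phi}P(v)$. A probabilistic constraint over $\mathcal{L}$ is $c_0+\sum_{i=1}^k c_i\,\mathsf{p}(\phi_i)\ge 0$ ($c_i\in\mathbb{R}$, $\phi_i\in\mathcal{L}$), satisfied by $P$ iff $c_0+\sum_ic_iP(\phi_i)\ge0$; $\mathrm{Mod}(\mathcal{R})$ is the set of distributions satisfying all constraints of $\mathcal{R}$, and $\mathcal{R}$ is consistent iff this set is nonempty; then $P^{ME}_{\mathcal{R}}$ is the unique element of $\mathrm{Mod}(\mathcal{R})$ maximizing the entropy $H(P)=-\sum_vP(v)\log P(v)$. *)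

theory Defs
  imports Complex_Main
begin

datatype 'a form = Var 'a | Neg "'a form" | Conj "'a form" "'a form" | Disj "'a form" "'a form"

fun fvars :: "'a form \<Rightarrow> 'a set" where
  "fvars (Var x) = {x}"
| "fvars (Neg f) = fvars f"
| "fvars (Conj f g) = fvars f \<union> fvars g"
| "fvars (Disj f g) = fvars f \<union> fvars g"

text \<open>A truth assignment over signature S is represented by the set of variables it
  makes true, so Int(L) = Pow S.\<close>
fun models :: "'a set \<Rightarrow> 'a form \<Rightarrow> bool" where
  "models v (Var x) = (x \<in> v)"
| "models v (Neg f) = (\<not> models v f)"
| "models v (Conj f g) = (models v f \<and> models v g)"
| "models v (Disj f g) = (models v f \<or> models v g)"

text \<open>Probability distributions over the language with signature S
  (extended by 0 outside Int(L), so that they are determined as functions).\<close>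
definition is_dist :: "'a set \<Rightarrow> ('a set \<Rightarrow> real) \<Rightarrow> bool" where
  "is_dist S P \<longleftrightarrow> (\<forall>v\<in>Pow S. 0 \<le> P v) \<and> (\<forall>v. v \<notin> Pow S \<longrightarrow> P v = 0)
     \<and> (\<Sum>v\<in>Pow S. P v) = 1"

definition prob :: "'a set \<Rightarrow> ('a set \<Rightarrow> real) \<Rightarrow> 'a form \<Rightarrow> real" where
  "prob S P f = (\<Sum>v\<in>{v\<in>Pow S. models v f}. P v)"

text \<open>A probabilistic constraint c0 + sum_i c_i p(phi_i) >= 0 is a pair (c0, [(c1,phi1),...]).\<close>
type_synonym 'a pconstr = "real \<times> (real \<times> 'a form) list"

definition constr_over :: "'a set \<Rightarrow> 'a pconstr \<Rightarrow> bool" where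
  "constr_over S c \<longleftrightarrow> (\<forall>(ci, f)\<in>set (snd c). fvars f \<subseteq> S)"

definition sat_constr :: "'a set \<Rightarrow> ('a set \<Rightarrow> real) \<Rightarrow> 'a pconstr \<Rightarrow> bool" where
  "sat_constr S P c \<longleftrightarrow> 0 \<le> fst c + (\<Sum>(ci, f)\<leftarrow>snd c. ci * prob S P f)"

definition Mod :: "'a set \<Rightarrow> 'a pconstr set \<Rightarrow> ('a set \<Rightarrow> real) set" where
  "Mod S R = {P. is_dist S P \<and> (\<forall>c\<in>R. sat_constr S P c)}"

definition entropy :: "'a set \<Rightarrow> ('a set \<Rightarrow> real) \<Rightarrow> real" where
  "entropy S P = - (\<Sum>v\<in>Pow S. P v * ln (P v))"

text \<open>The maximum entropy model (unique for consistent R).\<close>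
definition ME :: "'a set \<Rightarrow> 'a pconstr set \<Rightarrow> ('a set \<Rightarrow> real)" where
  "ME S R = (THE P. P \<in> Mod S R \<and> (\<forall>Q\<in>Mod S R. entropy S Q \<le> entropy S P))"

end

theory Submission
  imports Defs "HOL-Analysis.Analysis" "HOL-Real_Asymp.Real_Asymp"
begin


definition marg :: "'a set \<Rightarrow> 'a set \<Rightarrow> ('a set \<Rightarrow> real) \<Rightarrow> ('a set \<Rightarrow> real)" where
  "marg A B Q = (\<lambda>v. if v \<in> Pow A then (\<Sum>w\<in>Pow B. Q (v \<union> w)) else 0)"

definition prodd :: "'a set \<Rightarrow> 'a set \<Rightarrow> ('a set \<Rightarrow> real) \<Rightarrow> ('a set \<Rightarrow> real) \<Rightarrow> ('a set \<Rightarrow> real)" where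
  "prodd A B P1 P2 = (\<lambda>v. if v \<in> Pow (A \<union> B) then P1 (v \<inter> A) * P2 (v \<inter> B) else 0)"

lemma sum_split:
  assumes "finite A" "finite B" "A \<inter> B = {}"
  shows "(\<Sum>v\<in>Pow (A \<union> B). g v) = (\<Sum>v\<in>Pow A. \<Sum>w\<in>Pow B. g (v \<union> w))"
proof -
  have bij: "bij_betw (\<lambda>(v,w). v \<union> w) (Pow A \<times> Pow B) (Pow (A \<union> B))"
  proof (rule bij_betwI[where g="\<lambda>u. (u \<inter> A, u \<inter> B)"])
    show "(\<lambda>(v,w). v \<union> w) \<in> Pow A \<times> Pow B \<rightarrow> Pow (A \<union> B)" by auto
    show "(\<lambda>u. (u \<inter> A, u \<inter> B)) \<in> Pow (A \<union> B) \<rightarrow> Pow A \<times> Pow B" by auto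
    show "\<And>x. x \<in> Pow A \<times> Pow B \<Longrightarrow> (\<lambda>u. (u \<inter> A, u \<inter> B)) ((\<lambda>(v,w). v \<union> w) x) = x"
      using assms(3) by auto
    show "\<And>y. y \<in> Pow (A \<union> B) \<Longrightarrow> (\<lambda>(v,w). v \<union> w) (y \<inter> A, y \<inter> B) = y" by auto
  qed
  have "(\<Sum>v\<in>Pow (A \<union> B). g v) = (\<Sum>x\<in>Pow A \<times> Pow B. g ((\<lambda>(v,w). v \<union> w) x))"
    using sum.reindex_bij_betw[OF bij, of g] by simp
  also have "\<dots> = (\<Sum>v\<in>Pow A. \<Sum>w\<in>Pow B. g (v \<union> w))"
    by (simp add: sum.cartesian_product split_def)
  finally show ?thesis .
qed

lemma models_cong: "v \<inter> fvars f = w \<inter> fvars f \<Longrightarrow> models v f = models w f"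
  by (induction f) (force simp: set_eq_iff)+

lemma prob_if: "finite S \<Longrightarrow> prob S P f = (\<Sum>v\<in>Pow S. if models v f then P v else 0)"
  unfolding prob_def by (rule sum.inter_filter) simp

lemma marg_prob:
  assumes "finite A" "finite B" "A \<inter> B = {}" "fvars f \<subseteq> A"
  shows "prob (A \<union> B) Q f = prob A (marg A B Q) f"
proof -
  have "prob (A \<union> B) Q f = (\<Sum>v\<in>Pow A. \<Sum>w\<in>Pow B. if models (v \<union> w) f then Q (v \<union> w) else 0)"
    using assms by (simp add: prob_if sum_split)
  also have "\<dots> = (\<Sum>v\<in>Pow A. if models v f then marg A B Q v else 0)"
  proof (rule sum.cong[OF refl])
    fix v assume v: "v \<in> Pow A"
    have m: "\<And>w. w \<in> Pow B \<Longrightarrow> models (v \<union> w) f = models v f"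
      using assms(3,4) v by (intro models_cong) blast
    show "(\<Sum>w\<in>Pow B. if models (v \<union> w) f then Q (v \<union> w) else 0) = (if models v f then marg A B Q v else 0)"
      using v by (cases "models v f") (simp_all add: marg_def m)
  qed
  also have "\<dots> = prob A (marg A B Q) f" using assms by (simp add: prob_if)
  finally show ?thesis .
qed

lemma marg_sat:
  assumes "finite A" "finite B" "A \<inter> B = {}" "constr_over A c"
  shows "sat_constr (A \<union> B) Q c = sat_constr A (marg A B Q) c"
proof -
  have "map (\<lambda>(ci, f). ci * prob (A \<union> B) Q f) (snd c) = map (\<lambda>(ci, f). ci * prob A (marg A B Q) f) (snd c)"
    using assms(4) unfolding constr_over_def
    by (intro map_cong refl) (auto simp: marg_prob[OF assms(1-3)])
  then show ?thesis unfolding sat_constr_def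
    by (rule arg_cong[where f="\<lambda>x. 0 \<le> fst c + sum_list x"])
qed

lemma marg_dist:
  assumes "finite A" "finite B" "A \<inter> B = {}" "is_dist (A \<union> B) Q"
  shows "is_dist A (marg A B Q)"
  unfolding is_dist_def
proof (intro conjI ballI allI impI)
  fix v assume "v \<in> Pow A"
  then show "0 \<le> marg A B Q v" using assms(4) unfolding marg_def is_dist_def
    by (auto intro!: sum_nonneg)
next
  fix v assume "v \<notin> Pow A" then show "marg A B Q v = 0" by (simp add: marg_def)
next
  show "(\<Sum>v\<in>Pow A. marg A B Q v) = 1"
    using assms sum_split[OF assms(1-3), of Q] unfolding is_dist_def marg_def by simp
qed

lemma marg_Mod:
  assumes "finite A" "finite B" "A \<inter> B = {}" "Q \<in> Mod (A \<union> B) R" "R' \<subseteq> R"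
    "\<forall>c\<in>R'. constr_over A c"
  shows "marg A B Q \<in> Mod A R'"
proof -
  from assms(4) have d: "is_dist (A \<union> B) Q" and s: "\<forall>c\<in>R. sat_constr (A \<union> B) Q c"
    by (auto simp: Mod_def)
  have "sat_constr A (marg A B Q) c" if "c \<in> R'" for c
    using marg_sat[OF assms(1-3), of c Q] s assms(5,6) that by auto
  then show ?thesis unfolding Mod_def
    using marg_dist[OF assms(1-3) d] by auto
qed

lemma gibbs_pt:
  fixes q a b :: real
  assumes "0 \<le> q" "q \<le> a" "q \<le> b"
  shows "q - a*b \<le> q*ln q - q*ln a - q*ln b"
proof (cases "q = 0")
  case True then show ?thesis using assms by simp
next
  case False
  hence q: "q > 0" using assms by simp
  hence ab: "a > 0" "b > 0" using assms by auto
  have "ln (a*b/q) \<le> a*b/q - 1" using q ab by (intro ln_le_minus_one) simp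
  moreover have "ln (a*b/q) = ln a + ln b - ln q" using q ab by (simp add: ln_mult ln_div)
  ultimately have "ln a + ln b - ln q \<le> a*b/q - 1" by simp
  hence "q*(ln a + ln b - ln q) \<le> q*(a*b/q - 1)" using q by (intro mult_left_mono) auto
  also have "\<dots> = a*b - q" using q by (simp add: field_simps)
  finally show ?thesis by (simp add: algebra_simps)
qed

lemma subadd:
  assumes "finite A" "finite B" "A \<inter> B = {}" "is_dist (A \<union> B) Q"
  shows "entropy (A \<union> B) Q \<le> entropy A (marg A B Q) + entropy B (marg B A Q)"
proof -
  let ?Q1 = "marg A B Q" and ?Q2 = "marg B A Q"
  have d: "\<And>v. v\<in>Pow (A \<union> B) \<Longrightarrow> 0 \<le> Q v" using assms(4) by (auto simp: is_dist_def)
  have B': "B \<inter> A = {}" using assms(3) by blast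
  have BA: "B \<union> A = A \<union> B" by blast
  have q1: "\<And>v. v \<in> Pow A \<Longrightarrow> ?Q1 v = (\<Sum>w\<in>Pow B. Q (v \<union> w))" by (simp add: marg_def)
  have q2: "\<And>w. w \<in> Pow B \<Longrightarrow> ?Q2 w = (\<Sum>v\<in>Pow A. Q (v \<union> w))" by (simp add: marg_def Un_commute)
  have s1: "(\<Sum>v\<in>Pow A. ?Q1 v) = 1"
    using marg_dist[OF assms] by (auto simp: is_dist_def)
  have s2: "(\<Sum>w\<in>Pow B. ?Q2 w) = 1"
    using marg_dist[OF assms(2,1) B'] assms(4) by (auto simp: is_dist_def BA)
  have le1: "Q (v \<union> w) \<le> ?Q1 v" if "v\<in>Pow A" "w\<in>Pow B" for v w
    unfolding q1[OF that(1)] using that assms(2)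
    by (intro member_le_sum[where f="\<lambda>w. Q (v \<union> w)"]) (auto intro!: d)
  have le2: "Q (v \<union> w) \<le> ?Q2 w" if "v\<in>Pow A" "w\<in>Pow B" for v w
    unfolding q2[OF that(2)] using that assms(1)
    by (intro member_le_sum[where f="\<lambda>v. Q (v \<union> w)"]) (auto intro!: d)
  have e1: "entropy A ?Q1 = - (\<Sum>v\<in>Pow A. \<Sum>w\<in>Pow B. Q (v \<union> w) * ln (?Q1 v))"
    unfolding entropy_def
    by (rule arg_cong[where f=uminus], rule sum.cong[OF refl]) (simp add: q1 sum_distrib_right)
  have e2: "entropy B ?Q2 = - (\<Sum>v\<in>Pow A. \<Sum>w\<in>Pow B. Q (v \<union> w) * ln (?Q2 w))"
  proof -
    have "entropy B ?Q2 = - (\<Sum>w\<in>Pow B. \<Sum>v\<in>Pow A. Q (v \<union> w) * ln (?Q2 w))"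
      unfolding entropy_def
      by (rule arg_cong[where f=uminus], rule sum.cong[OF refl]) (simp add: q2 sum_distrib_right)
    then show ?thesis by (simp add: sum.swap[where A="Pow B"])
  qed
  have e0: "entropy (A \<union> B) Q = - (\<Sum>v\<in>Pow A. \<Sum>w\<in>Pow B. Q (v \<union> w) * ln (Q (v \<union> w)))"
    unfolding entropy_def by (simp add: sum_split[OF assms(1-3)])
  have "0 = (\<Sum>v\<in>Pow A. \<Sum>w\<in>Pow B. Q (v \<union> w) - ?Q1 v * ?Q2 w)"
  proof -
    have "(\<Sum>v\<in>Pow A. \<Sum>w\<in>Pow B. Q (v \<union> w)) = 1"
      using assms(4) sum_split[OF assms(1-3), of Q] by (simp add: is_dist_def)
    moreover have "(\<Sum>v\<in>Pow A. \<Sum>w\<in>Pow B. ?Q1 v * ?Q2 w) = 1"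
      using s1 s2 by (simp add: sum_product[symmetric])
    ultimately show ?thesis by (simp add: sum_subtractf)
  qed
  also have "\<dots> \<le> (\<Sum>v\<in>Pow A. \<Sum>w\<in>Pow B. Q (v \<union> w) * ln (Q (v \<union> w)) - Q (v \<union> w) * ln (?Q1 v) - Q (v \<union> w) * ln (?Q2 w))"
    by (intro sum_mono gibbs_pt le1 le2 d) auto
  finally show ?thesis unfolding e0 e1 e2 by (simp add: sum_subtractf)
qed

lemma prodd_eq:
  assumes "A \<inter> B = {}" "v \<in> Pow A" "w \<in> Pow B"
  shows "prodd A B P1 P2 (v \<union> w) = P1 v * P2 w"
proof -
  have "(v \<union> w) \<inter> A = v" "(v \<union> w) \<inter> B = w" using assms by blast+
  moreover have "v \<union> w \<in> Pow (A \<union> B)" using assms by auto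
  ultimately show ?thesis unfolding prodd_def by simp
qed

lemma prodd_dist:
  assumes "finite A" "finite B" "A \<inter> B = {}" "is_dist A P1" "is_dist B P2"
  shows "is_dist (A \<union> B) (prodd A B P1 P2)"
  unfolding is_dist_def
proof (intro conjI ballI allI impI)
  fix v assume v: "v \<in> Pow (A \<union> B)"
  have "v \<inter> A \<in> Pow A" "v \<inter> B \<in> Pow B" by auto
  then show "0 \<le> prodd A B P1 P2 v" using v assms(4,5)
    by (auto simp: prodd_def is_dist_def intro!: mult_nonneg_nonneg)
next
  fix v assume "v \<notin> Pow (A \<union> B)" then show "prodd A B P1 P2 v = 0" by (simp add: prodd_def)
next
  have "(\<Sum>v\<in>Pow (A \<union> B). prodd A B P1 P2 v) = (\<Sum>v\<in>Pow A. \<Sum>w\<in>Pow B. P1 v * P2 w)"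
    by (simp add: sum_split[OF assms(1-3)] prodd_eq[OF assms(3)])
  also have "\<dots> = 1" using assms(4,5) by (simp add: sum_product[symmetric] is_dist_def)
  finally show "(\<Sum>v\<in>Pow (A \<union> B). prodd A B P1 P2 v) = 1" .
qed

lemma marg_prodd1:
  assumes "finite A" "finite B" "A \<inter> B = {}" "is_dist A P1" "is_dist B P2"
  shows "marg A B (prodd A B P1 P2) = P1"
proof
  fix v show "marg A B (prodd A B P1 P2) v = P1 v"
  proof (cases "v \<in> Pow A")
    case True
    have "marg A B (prodd A B P1 P2) v = (\<Sum>w\<in>Pow B. P1 v * P2 w)"
      using True by (simp add: marg_def prodd_eq[OF assms(3)])
    also have "\<dots> = P1 v" using assms(5) by (simp add: sum_distrib_left[symmetric] is_dist_def)
    finally show ?thesis .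
  next
    case False then show ?thesis using assms(4) by (simp add: marg_def is_dist_def)
  qed
qed

lemma marg_prodd2:
  assumes "finite A" "finite B" "A \<inter> B = {}" "is_dist A P1" "is_dist B P2"
  shows "marg B A (prodd A B P1 P2) = P2"
proof
  fix v show "marg B A (prodd A B P1 P2) v = P2 v"
  proof (cases "v \<in> Pow B")
    case True
    have "marg B A (prodd A B P1 P2) v = (\<Sum>w\<in>Pow A. P1 w * P2 v)"
      using True by (simp add: marg_def prodd_eq[OF assms(3)] Un_commute[of v])
    also have "\<dots> = P2 v" using assms(4) by (simp add: sum_distrib_right[symmetric] is_dist_def)
    finally show ?thesis .
  next
    case False then show ?thesis using assms(5) by (simp add: marg_def is_dist_def)
  qed
qed

lemma xlnx_mult:
  fixes a b :: real assumes "0 \<le> a" "0 \<le> b"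
  shows "(a*b)*ln(a*b) = b*(a*ln a) + a*(b*ln b)"
proof (cases "a = 0 \<or> b = 0")
  case True then show ?thesis by auto
next
  case False then have "a > 0" "b > 0" using assms by auto
  then show ?thesis by (simp add: ln_mult algebra_simps)
qed

lemma entropy_prodd:
  assumes "finite A" "finite B" "A \<inter> B = {}" "is_dist A P1" "is_dist B P2"
  shows "entropy (A \<union> B) (prodd A B P1 P2) = entropy A P1 + entropy B P2"
proof -
  have n1: "\<And>v. v \<in> Pow A \<Longrightarrow> 0 \<le> P1 v" and n2: "\<And>v. v \<in> Pow B \<Longrightarrow> 0 \<le> P2 v"
    and s1: "sum P1 (Pow A) = 1" and s2: "sum P2 (Pow B) = 1"
    using assms(4,5) by (auto simp: is_dist_def)
  have "(\<Sum>v\<in>Pow (A \<union> B). prodd A B P1 P2 v * ln (prodd A B P1 P2 v))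
      = (\<Sum>v\<in>Pow A. \<Sum>w\<in>Pow B. (P1 v * P2 w) * ln (P1 v * P2 w))"
    by (simp add: sum_split[OF assms(1-3)] prodd_eq[OF assms(3)])
  also have "\<dots> = (\<Sum>v\<in>Pow A. \<Sum>w\<in>Pow B. P2 w * (P1 v * ln (P1 v)) + P1 v * (P2 w * ln (P2 w)))"
    by (intro sum.cong refl xlnx_mult n1 n2)
  also have "\<dots> = (\<Sum>v\<in>Pow A. (P1 v * ln (P1 v)) * (\<Sum>w\<in>Pow B. P2 w) + P1 v * (\<Sum>w\<in>Pow B. P2 w * ln (P2 w)))"
    by (rule sum.cong[OF refl]) (simp add: sum.distrib sum_distrib_left mult_ac)
  also have "\<dots> = (\<Sum>v\<in>Pow A. P1 v * ln (P1 v)) + (\<Sum>v\<in>Pow A. P1 v) * (\<Sum>w\<in>Pow B. P2 w * ln (P2 w))"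
    using s2 by (simp add: sum.distrib sum_distrib_right)
  finally show ?thesis using s1 s2 by (simp add: entropy_def)
qed



lemma xlnx_cont: "continuous_on {0..} (\<lambda>x::real. x * ln x)"
proof -
  have lim: "((\<lambda>x::real. x * ln x) \<longlongrightarrow> 0) (at_right 0)" by real_asymp
  show ?thesis
  proof (clarsimp simp: continuous_on_eq_continuous_within)
    fix x :: real assume "0 \<le> x"
    show "continuous (at x within {0..}) (\<lambda>x. x * ln x)"
    proof (cases "x = 0")
      case True
      have "at (0::real) within {0..} = at_right 0"
        by (rule at_within_Ici_at_right)
      then show ?thesis using lim True by (simp add: continuous_within)
    next
      case False
      then show ?thesis using \<open>0 \<le> x\<close>
        by (intro continuous_intros) auto
    qed
  qed
qed


lemma ln_less_minus_one:
  fixes x :: real assumes "0 < x" "x \<noteq> 1" shows "ln x < x - 1"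
proof -
  define s where "s = sqrt x"
  have s0: "0 < s" using assms by (simp add: s_def)
  have s2: "s * s = x" using assms by (simp add: s_def)
  have s1: "s \<noteq> 1" using assms by (auto simp: s_def)
  have "ln x = ln s + ln s" using s0 s2[symmetric] by (simp add: ln_mult)
  also have "\<dots> \<le> (s - 1) + (s - 1)" using ln_le_minus_one[OF s0] by simp
  also have "\<dots> < x - 1"
  proof -
    have "s - 1 \<noteq> 0" using s1 by simp
    then have "0 < (s - 1) * (s - 1)" by (metis not_real_square_gt_zero)
    moreover have "(s - 1) * (s - 1) = x - 2 * s + 1" unfolding s2[symmetric] by (simp add: algebra_simps)
    ultimately have "0 < x - 2 * s + 1" by simp
    then show ?thesis by linarith
  qed
  finally show ?thesis .
qed
lemma ln_ineq:
  fixes a m :: real assumes "0 \<le> a" "0 < m"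
  shows "a - m \<le> a*ln a - a*ln m" and "a \<noteq> m \<Longrightarrow> a - m < a*ln a - a*ln m"
proof -
  have main: "a - m < a*ln a - a*ln m" if "a \<noteq> m"
  proof (cases "a = 0")
    case True then show ?thesis using assms by simp
  next
    case False
    hence a: "a > 0" using assms by simp
    have "ln (m/a) < m/a - 1" using a assms that by (intro ln_less_minus_one) auto
    moreover have "ln (m/a) = ln m - ln a" using a assms by (simp add: ln_div)
    ultimately have "a * (ln m - ln a) < a * (m/a - 1)" using a by (intro mult_strict_left_mono) auto
    also have "\<dots> = m - a" using a by (simp add: field_simps)
    finally show ?thesis by (simp add: algebra_simps)
  qed
  show "a - m \<le> a*ln a - a*ln m"
    by (cases "a = m") (use main in auto)
  show "a \<noteq> m \<Longrightarrow> a - m < a*ln a - a*ln m" by (rule main)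
qed

lemma mid_ineq:
  fixes a b :: real assumes "0 \<le> a" "0 \<le> b"
  shows "((a+b)/2) * ln ((a+b)/2) \<le> (a * ln a + b * ln b)/2"
    and "a \<noteq> b \<Longrightarrow> ((a+b)/2) * ln ((a+b)/2) < (a * ln a + b * ln b)/2"
proof -
  have strict: "((a+b)/2) * ln ((a+b)/2) < (a * ln a + b * ln b)/2" if "a \<noteq> b"
  proof -
    let ?m = "(a+b)/2"
    have m: "0 < ?m" using assms that by auto
    have "a - ?m < a*ln a - a*ln ?m" using ln_ineq(2)[OF assms(1) m] that by auto
    moreover have "b - ?m \<le> b*ln b - b*ln ?m" using ln_ineq(1)[OF assms(2) m] by auto
    ultimately have "(a - ?m) + (b - ?m) < (a*ln a - a*ln ?m) + (b*ln b - b*ln ?m)"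
      by (rule add_less_le_mono)
    then have "(a+b)*ln ?m < a*ln a + b*ln b" by (simp add: field_simps)
    then have "((a+b)*ln ?m)/2 < (a*ln a + b*ln b)/2" by (rule divide_strict_right_mono) simp
    then show ?thesis by (metis times_divide_eq_left)
  qed
  show "((a+b)/2) * ln ((a+b)/2) \<le> (a * ln a + b * ln b)/2"
    by (cases "a = b") (use strict in auto)
  show "a \<noteq> b \<Longrightarrow> ((a+b)/2) * ln ((a+b)/2) < (a * ln a + b * ln b)/2" by (rule strict)
qed

lemma sum_list_mid:
  fixes g h :: "'b \<Rightarrow> real"
  shows
  "(\<Sum>(ci, f)\<leftarrow>xs. ci * ((g f + h f)/2)) = ((\<Sum>(ci, f)\<leftarrow>xs. ci * g f) + (\<Sum>(ci, f)\<leftarrow>xs. ci * h f))/2"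
  by (induction xs) (auto simp: field_simps)

lemma Mod_mid:
  assumes "P \<in> Mod S R" "P' \<in> Mod S R"
  shows "(\<lambda>v. (P v + P' v)/2) \<in> Mod S R"
proof -
  have pm: "prob S (\<lambda>v. (P v + P' v)/2) f = (prob S P f + prob S P' f)/2" for f
    unfolding prob_def by (simp add: sum.distrib sum_divide_distrib[symmetric])
  have d: "is_dist S (\<lambda>v. (P v + P' v)/2)"
    using assms unfolding Mod_def is_dist_def by (auto simp: sum.distrib sum_divide_distrib[symmetric])
  have "sat_constr S (\<lambda>v. (P v + P' v)/2) c" if "c \<in> R" for c
  proof -
    have "0 \<le> fst c + (\<Sum>(ci, f)\<leftarrow>snd c. ci * prob S P f)"
      "0 \<le> fst c + (\<Sum>(ci, f)\<leftarrow>snd c. ci * prob S P' f)"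
      using assms that by (auto simp: Mod_def sat_constr_def)
    then show ?thesis unfolding sat_constr_def pm
      using sum_list_mid[of "\<lambda>f. prob S P f" "\<lambda>f. prob S P' f" "snd c"] by simp
  qed
  then show ?thesis using d by (simp add: Mod_def)
qed

lemma prob_cont: "continuous_on UNIV (\<lambda>P. prob S P f)"
  unfolding prob_def by (intro continuous_on_sum continuous_on_product_coordinates)

lemma sum_list_cont: "continuous_on UNIV (\<lambda>P. (\<Sum>(ci, f)\<leftarrow>xs. ci * prob S P f))"
proof (induction xs)
  case Nil then show ?case by simp
next
  case (Cons x xs)
  obtain ci f where x: "x = (ci, f)" by force
  show ?case unfolding x using Cons prob_cont[of S f]
    by (simp, intro continuous_intros) auto
qed


lemma Mod_closed: "closed (Mod S R)"
proof -
  have eq: "Mod S R = {P. \<forall>v. v \<in> Pow S \<longrightarrow> 0 \<le> P v} \<inter> {P. \<forall>v. v \<notin> Pow S \<longrightarrow> P v = 0}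
     \<inter> {P. (\<Sum>v\<in>Pow S. P v) = 1} \<inter> (\<Inter>c\<in>R. {P. sat_constr S P c})"
    by (auto simp: Mod_def is_dist_def)
  have c1: "closed {P::'a set \<Rightarrow> real. v \<in> Pow S \<longrightarrow> 0 \<le> P v}" for v
    by (cases "v \<in> Pow S") (auto intro!: closed_Collect_le continuous_on_product_coordinates continuous_intros)
  have c2: "closed {P::'a set \<Rightarrow> real. v \<notin> Pow S \<longrightarrow> P v = 0}" for v
    by (cases "v \<in> Pow S") (auto intro!: closed_Collect_eq continuous_on_product_coordinates continuous_intros)
  have c3: "closed {P::'a set \<Rightarrow> real. (\<Sum>v\<in>Pow S. P v) = 1}"
    by (intro closed_Collect_eq continuous_on_sum continuous_on_product_coordinates continuous_intros)
  have c4: "closed {P. sat_constr S P c}" for c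
    unfolding sat_constr_def
    by (intro closed_Collect_le continuous_intros sum_list_cont)
  show ?thesis unfolding eq
    by (intro closed_Int closed_INT ballI c3 c4 closed_Collect_all c1 c2)
qed

lemma Mod_compact:
  assumes "finite S"
  shows "compact (Mod S R)"
proof -
  define K where "K = (\<lambda>v::'a set. if v \<in> Pow S then {0..1::real} else {0})"
  have "compactin (product_topology (\<lambda>_. euclidean) UNIV) (PiE UNIV K)"
    unfolding compactin_PiE by (auto simp: K_def)
  hence cK: "compact (PiE UNIV K)" by (simp add: euclidean_product_topology)
  have sub: "Mod S R \<subseteq> PiE UNIV K"
  proof
    fix P assume "P \<in> Mod S R"
    hence d: "is_dist S P" by (simp add: Mod_def)
    have "P v \<in> K v" for v
    proof (cases "v \<in> Pow S")
      case True
      have "P v \<le> (\<Sum>v\<in>Pow S. P v)"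
        using d True assms by (intro member_le_sum) (auto simp: is_dist_def)
      then show ?thesis using d True by (auto simp: K_def is_dist_def)
    next
      case False then show ?thesis using d by (auto simp: K_def is_dist_def)
    qed
    then show "P \<in> PiE UNIV K" by auto
  qed
  have "compact (PiE UNIV K \<inter> Mod S R)" using cK Mod_closed by (rule compact_Int_closed)
  moreover have "PiE UNIV K \<inter> Mod S R = Mod S R" using sub by blast
  ultimately show ?thesis by simp
qed

lemma entropy_cont: "continuous_on (Mod S R) (entropy S)"
proof -
  have "continuous_on (Mod S R) (\<lambda>P. P v * ln (P v))" if "v \<in> Pow S" for v
  proof (rule continuous_on_compose2[OF xlnx_cont, of _ "\<lambda>P. P v"])
    show "continuous_on (Mod S R) (\<lambda>P. P v)"
      by (rule continuous_on_subset[OF continuous_on_product_coordinates]) simp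
    show "(\<lambda>P. P v) ` Mod S R \<subseteq> {0..}" using that by (auto simp: Mod_def is_dist_def)
  qed
  then show ?thesis unfolding entropy_def
    by (intro continuous_on_minus continuous_on_sum) auto
qed

lemma ME_unique_ex:
  assumes "finite S" "Mod S R \<noteq> {}"
  shows "\<exists>!P. P \<in> Mod S R \<and> (\<forall>Q\<in>Mod S R. entropy S Q \<le> entropy S P)"
proof (rule ex_ex1I)
  show "\<exists>P. P \<in> Mod S R \<and> (\<forall>Q\<in>Mod S R. entropy S Q \<le> entropy S P)"
    using continuous_attains_sup[OF Mod_compact[OF assms(1)] assms(2) entropy_cont] by blast
next
  fix P P' assume P: "P \<in> Mod S R \<and> (\<forall>Q\<in>Mod S R. entropy S Q \<le> entropy S P)"
    and P': "P' \<in> Mod S R \<and> (\<forall>Q\<in>Mod S R. entropy S Q \<le> entropy S P')"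
  show "P = P'"
  proof (rule ccontr)
    assume ne: "P \<noteq> P'"
    let ?M = "\<lambda>v. (P v + P' v)/2"
    have M: "?M \<in> Mod S R" using P P' Mod_mid by blast
    have dP: "is_dist S P" "is_dist S P'" using P P' by (auto simp: Mod_def)
    obtain v where v: "P v \<noteq> P' v" using ne by auto
    have vS: "v \<in> Pow S"
    proof (rule ccontr)
      assume "v \<notin> Pow S"
      then have "P v = 0" "P' v = 0" using dP unfolding is_dist_def by blast+
      with v show False by simp
    qed
    have "(\<Sum>v\<in>Pow S. ?M v * ln (?M v)) < (\<Sum>v\<in>Pow S. (P v * ln (P v) + P' v * ln (P' v))/2)"
    proof (rule sum_strict_mono_ex1)
      show "finite (Pow S)" using assms by simp
      show "\<forall>x\<in>Pow S. ?M x * ln (?M x) \<le> (P x * ln (P x) + P' x * ln (P' x))/2"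
      proof
        fix x assume "x \<in> Pow S"
        then have "0 \<le> P x" "0 \<le> P' x" using dP by (auto simp: is_dist_def)
        then show "?M x * ln (?M x) \<le> (P x * ln (P x) + P' x * ln (P' x))/2"
          by (rule mid_ineq(1))
      qed
      have "0 \<le> P v" "0 \<le> P' v" using dP vS by (auto simp: is_dist_def)
      then have "?M v * ln (?M v) < (P v * ln (P v) + P' v * ln (P' v))/2"
        using v by (rule mid_ineq(2))
      then show "\<exists>a\<in>Pow S. ?M a * ln (?M a) < (P a * ln (P a) + P' a * ln (P' a))/2"
        using vS by blast
    qed
    hence "entropy S ?M > (entropy S P + entropy S P')/2"
      unfolding entropy_def by (simp add: sum.distrib sum_divide_distrib[symmetric])
    moreover have "entropy S P' \<le> entropy S P" "entropy S P \<le> entropy S P'" using P P' by auto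
    moreover have "entropy S ?M \<le> entropy S P" using P M by auto
    ultimately show False by (simp add: field_simps)
  qed
qed



lemma ME_max:
  assumes "finite S" "Mod S R \<noteq> {}"
  shows "ME S R \<in> Mod S R \<and> (\<forall>Q\<in>Mod S R. entropy S Q \<le> entropy S (ME S R))"
  unfolding ME_def by (rule theI'[OF ME_unique_ex[OF assms]])

lemma ME_eq:
  assumes "finite S" "P \<in> Mod S R" "\<forall>Q\<in>Mod S R. entropy S Q \<le> entropy S P"
  shows "ME S R = P"
proof -
  have ne: "Mod S R \<noteq> {}" using assms by auto
  show ?thesis unfolding ME_def
    using assms ME_unique_ex[OF assms(1) ne] by (intro the1_equality) auto
qed


theorem lemma2:
  fixes S1 S2 :: "'a set" and R1 R2 :: "'a pconstr set"
  assumes "finite S1" and "finite S2" and "S1 \<inter> S2 = {}"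
    and "finite R1" and "finite R2"
    and "\<forall>c\<in>R1. constr_over S1 c" and "\<forall>c\<in>R2. constr_over S2 c"
    and "Mod S1 R1 \<noteq> {}" and "Mod S2 R2 \<noteq> {}"
  shows "(\<forall>v1\<in>Pow S1. \<forall>v2\<in>Pow S2.
            ME (S1 \<union> S2) (R1 \<union> R2) (v1 \<union> v2) = ME S1 R1 v1 * ME S2 R2 v2)
       \<and> (\<forall>v1\<in>Pow S1. (\<Sum>v2\<in>Pow S2. ME (S1 \<union> S2) (R1 \<union> R2) (v1 \<union> v2)) = ME S1 R1 v1)
       \<and> (\<forall>v2\<in>Pow S2. (\<Sum>v1\<in>Pow S1. ME (S1 \<union> S2) (R1 \<union> R2) (v1 \<union> v2)) = ME S2 R2 v2)"
proof -
  define P1 where "P1 = ME S1 R1"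
  define P2 where "P2 = ME S2 R2"
  have M1: "P1 \<in> Mod S1 R1" "\<forall>Q\<in>Mod S1 R1. entropy S1 Q \<le> entropy S1 P1"
    using ME_max[OF assms(1) assms(8)] unfolding P1_def by auto
  have M2: "P2 \<in> Mod S2 R2" "\<forall>Q\<in>Mod S2 R2. entropy S2 Q \<le> entropy S2 P2"
    using ME_max[OF assms(2) assms(9)] unfolding P2_def by auto
  have d1: "is_dist S1 P1" "is_dist S2 P2" using M1 M2 by (auto simp: Mod_def)
  define P where "P = prodd S1 S2 P1 P2"
  have disj': "S2 \<inter> S1 = {}" using assms(3) by blast
  have U: "S2 \<union> S1 = S1 \<union> S2" by blast
  have fin: "finite (S1 \<union> S2)" using assms(1,2) by simp
  have dP: "is_dist (S1 \<union> S2) P" using prodd_dist[OF assms(1-3) d1] unfolding P_def .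
  have mP1: "marg S1 S2 P = P1" using marg_prodd1[OF assms(1-3) d1] unfolding P_def .
  have mP2: "marg S2 S1 P = P2" using marg_prodd2[OF assms(1-3) d1] unfolding P_def .
  have PMod: "P \<in> Mod (S1 \<union> S2) (R1 \<union> R2)"
    unfolding Mod_def
  proof (intro CollectI conjI ballI dP)
    fix c assume "c \<in> R1 \<union> R2"
    then show "sat_constr (S1 \<union> S2) P c"
    proof
      assume c: "c \<in> R1"
      have "sat_constr S1 P1 c" using M1(1) c by (auto simp: Mod_def)
      moreover have "constr_over S1 c" using assms(6) c by blast
      ultimately show ?thesis using marg_sat[OF assms(1-3), of c P] mP1 by simp
    next
      assume c: "c \<in> R2"
      have "sat_constr S2 P2 c" using M2(1) c by (auto simp: Mod_def)
      moreover have "constr_over S2 c" using assms(7) c by blast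
      ultimately show ?thesis using marg_sat[OF assms(2,1) disj', of c P] mP2 U by simp
    qed
  qed
  have Pmax: "\<forall>Q\<in>Mod (S1 \<union> S2) (R1 \<union> R2). entropy (S1 \<union> S2) Q \<le> entropy (S1 \<union> S2) P"
  proof
    fix Q assume Q: "Q \<in> Mod (S1 \<union> S2) (R1 \<union> R2)"
    have dQ: "is_dist (S1 \<union> S2) Q" using Q by (simp add: Mod_def)
    have q1: "marg S1 S2 Q \<in> Mod S1 R1"
      using marg_Mod[OF assms(1-3) Q, where R'=R1] assms(6) by auto
    have Q': "Q \<in> Mod (S2 \<union> S1) (R1 \<union> R2)" using Q U by simp
    have q2: "marg S2 S1 Q \<in> Mod S2 R2"
      using marg_Mod[OF assms(2,1) disj' Q', where R'=R2] assms(7) by auto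
    have "entropy (S1 \<union> S2) Q \<le> entropy S1 (marg S1 S2 Q) + entropy S2 (marg S2 S1 Q)"
      by (rule subadd[OF assms(1-3) dQ])
    also have "\<dots> \<le> entropy S1 P1 + entropy S2 P2" using M1(2) M2(2) q1 q2 by (intro add_mono) auto
    also have "\<dots> = entropy (S1 \<union> S2) P" using entropy_prodd[OF assms(1-3) d1] unfolding P_def by simp
    finally show "entropy (S1 \<union> S2) Q \<le> entropy (S1 \<union> S2) P" .
  qed
  have ME: "ME (S1 \<union> S2) (R1 \<union> R2) = P" by (rule ME_eq[OF fin PMod Pmax])
  have pe: "P (v1 \<union> v2) = P1 v1 * P2 v2" if "v1 \<in> Pow S1" "v2 \<in> Pow S2" for v1 v2
    using prodd_eq[OF assms(3) that] unfolding P_def .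
  show ?thesis
  proof (intro conjI ballI)
    fix v1 v2 assume "v1 \<in> Pow S1" "v2 \<in> Pow S2"
    then show "ME (S1 \<union> S2) (R1 \<union> R2) (v1 \<union> v2) = ME S1 R1 v1 * ME S2 R2 v2"
      using pe unfolding ME P1_def[symmetric] P2_def[symmetric] by simp
  next
    fix v1 assume v1: "v1 \<in> Pow S1"
    have "(\<Sum>v2\<in>Pow S2. ME (S1 \<union> S2) (R1 \<union> R2) (v1 \<union> v2)) = marg S1 S2 P v1"
      using v1 unfolding ME by (simp add: marg_def)
    then show "(\<Sum>v2\<in>Pow S2. ME (S1 \<union> S2) (R1 \<union> R2) (v1 \<union> v2)) = ME S1 R1 v1"
      using mP1 unfolding P1_def by simp
  next
    fix v2 assume v2: "v2 \<in> Pow S2"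
    have "(\<Sum>v1\<in>Pow S1. ME (S1 \<union> S2) (R1 \<union> R2) (v1 \<union> v2)) = marg S2 S1 P v2"
      using v2 unfolding ME by (simp add: marg_def Un_commute[of v2])
    then show "(\<Sum>v1\<in>Pow S1. ME (S1 \<union> S2) (R1 \<union> R2) (v1 \<union> v2)) = ME S2 R2 v2"
      using mP2 unfolding P2_def by simp
  qed
qed


end
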